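(* Let $N_t, N_c, N_{RF}, K, N_s$ be positive integers with $K N_s \le N_{RF}$. Let $\theta_1,\dots,\theta_{N_c}\in\mathbb{R}$, let $\mathbf{c}=\frac{1}{\sqrt{N_c}}[e^{j\theta_1},\dots,e^{j\theta_{N_c}}]^T\in\mathbb{C}^{N_c}$, and let $\mathbf{C}=\mathrm{blkdiag}(\mathbf{c},\dots,\mathbf{c})\in\mathbb{C}^{N_cN_{RF}\times N_{RF}}$ be the block-diagonal matrix with $N_{RF}$ copies of $\mathbf{c}$ on its diagonal. Let $\mathbf{F}_{\mathrm{opt}}\in\mathbb{C}^{N_t\times KN_s}$, let $\mathbf{S}\in\{0,1\}^{N_t\times N_cN_{RF}}$, let $\alpha\in\mathbb{R}$, and let $\mathbf{F}_{\mathrm{DD}}\in\mathbb{C}^{N_{RF}\times KN_s}$ satisfy $\mathbf{F}_{\mathrm{DD}}^H\mathbf{F}_{\mathrm{DD}}=\mathbf{I}_{KN_s}$. Set $\mathbf{F}_{\mathrm{BB}}=\alpha\mathbf{F}_{\mathrm{DD}}$. Then $$\left\|\mathbf{F}_{\mathrm{opt}}-\mathbf{S}\mathbf{C}\mathbf{F}_{\mathrm{BB}}\right\|_F^2\le \left\|\mathbf{F}_{\mathrm{opt}}\right\|_F^2-2\alpha\,\Re\,\mathrm{tr}\!\left(\mathbf{F}_{\mathrm{DD}}\mathbf{F}_{\mathrm{opt}}^H\mathbf{S}\mathbf{C}\right)+\alpha^2\left\|\mathbf{S}\right\|_F^2 .$$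
   Context: $j$ denotes the imaginary unit, $(\cdot)^H$ the conjugate transpose, $\|\cdot\|_F$ the Frobenius norm, $\mathrm{tr}$ the trace and $\Re$ the real part. In the application, $\mathbf{S}\mathbf{C}$ is the analog precoder built from $N_c$ fixed phase shifters and a binary switch matrix $\mathbf{S}$, and $\mathbf{F}_{\mathrm{opt}}$ is a fully digital precoder to be approximated. *)

theory Defs
  imports Complex_Main "Jordan_Normal_Form.Matrix"
begin

definition herm :: "complex mat \<Rightarrow> complex mat" where
  "herm A = mat (dim_col A) (dim_row A) (\<lambda>(i,j). cnj (A $$ (j,i)))"

definition mtrace :: "complex mat \<Rightarrow> complex" where
  "mtrace A = (\<Sum>i<dim_row A. A $$ (i,i))"

definition frob_sq :: "complex mat \<Rightarrow> real" where
  "frob_sq A = (\<Sum>i<dim_row A. \<Sum>j<dim_col A. (cmod (A $$ (i,j)))\<^sup>2)"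

(* the vector c = (1/sqrt Nc) [e^{j theta_1}, ..., e^{j theta_Nc}]^T (0-indexed) *)
definition cvec :: "nat \<Rightarrow> (nat \<Rightarrow> real) \<Rightarrow> nat \<Rightarrow> complex" where
  "cvec Nc \<theta> i = exp (\<i> * complex_of_real (\<theta> i)) / complex_of_real (sqrt (real Nc))"

(* C = blkdiag(c,...,c) with NRF copies: an (Nc*NRF) x NRF matrix *)
definition Cmat :: "nat \<Rightarrow> nat \<Rightarrow> (nat \<Rightarrow> real) \<Rightarrow> complex mat" where
  "Cmat Nc NRF \<theta> = mat (Nc * NRF) NRF
     (\<lambda>(i,k). if i div Nc = k then cvec Nc \<theta> (i mod Nc) else 0)"

end

theory Submission
  imports Defs
begin

lemma bessel:
  fixes x :: "nat \<Rightarrow> complex" and D :: "nat \<Rightarrow> nat \<Rightarrow> complex"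
  assumes orth: "\<And>j k. j<m \<Longrightarrow> k<m \<Longrightarrow> (\<Sum>a<n. cnj (D a j) * D a k) = (if j=k then 1 else 0)"
  shows "(\<Sum>j<m. (cmod (\<Sum>a<n. x a * D a j))\<^sup>2) \<le> (\<Sum>a<n. (cmod (x a))\<^sup>2)"
proof -
  define y where "y j = (\<Sum>a<n. x a * D a j)" for j
  define w where "w a = (\<Sum>j<m. y j * cnj (D a j))" for a
  have e: "(x a - w a) * cnj (x a - w a) = x a * cnj (x a) - x a * cnj (w a) - cnj (x a) * w a + w a * cnj (w a)" for a
    by (simp add: algebra_simps)
  have T2: "(\<Sum>a<n. x a * cnj (w a)) = (\<Sum>j<m. y j * cnj (y j))"
  proof -
    have "(\<Sum>a<n. x a * cnj (w a)) = (\<Sum>a<n. \<Sum>j<m. x a * cnj (y j) * D a j)"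
      by (simp add: w_def sum_distrib_left mult.assoc)
    also have "\<dots> = (\<Sum>j<m. \<Sum>a<n. x a * cnj (y j) * D a j)" by (rule sum.swap)
    also have "\<dots> = (\<Sum>j<m. cnj (y j) * y j)"
    proof (rule sum.cong[OF refl])
      fix j
      have "(\<Sum>a<n. x a * c * D a j) = c * (\<Sum>a<n. x a * D a j)" for c
        by (simp add: sum_distrib_left algebra_simps)
      then show "(\<Sum>a<n. x a * cnj (y j) * D a j) = cnj (y j) * y j" by (simp add: y_def)
    qed
    finally show ?thesis by (simp add: mult.commute)
  qed
  have T3: "(\<Sum>a<n. cnj (x a) * w a) = (\<Sum>j<m. y j * cnj (y j))"
  proof -
    have "(\<Sum>a<n. cnj (x a) * w a) = cnj (\<Sum>a<n. x a * cnj (w a))" by simp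
    then show ?thesis using T2 by (simp add: mult.commute)
  qed
  have T4: "(\<Sum>a<n. w a * cnj (w a)) = (\<Sum>j<m. y j * cnj (y j))"
  proof -
    have "(\<Sum>a<n. w a * cnj (w a)) = (\<Sum>a<n. \<Sum>k<m. \<Sum>j<m. y j * cnj (y k) * (cnj (D a j) * D a k))"
      by (simp add: w_def sum_distrib_left sum_distrib_right algebra_simps)
    also have "\<dots> = (\<Sum>k<m. \<Sum>a<n. \<Sum>j<m. y j * cnj (y k) * (cnj (D a j) * D a k))" by (rule sum.swap)
    also have "\<dots> = (\<Sum>k<m. \<Sum>j<m. \<Sum>a<n. y j * cnj (y k) * (cnj (D a j) * D a k))"
      by (rule sum.cong[OF refl], rule sum.swap)
    also have "\<dots> = (\<Sum>k<m. \<Sum>j<m. y j * cnj (y k) * (if j = k then 1 else 0))"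
      by (rule sum.cong[OF refl], rule sum.cong[OF refl], simp add: sum_distrib_left[symmetric] orth)
    also have "\<dots> = (\<Sum>j<m. y j * cnj (y j))"
      by (simp add: if_distrib cong: if_cong)
    finally show ?thesis .
  qed
  have "(\<Sum>a<n. (x a - w a) * cnj (x a - w a)) = (\<Sum>a<n. x a * cnj (x a)) - (\<Sum>j<m. y j * cnj (y j))"
    by (simp only: e sum.distrib sum_subtractf T2 T3 T4) simp
  hence "(\<Sum>a<n. complex_of_real ((cmod (x a - w a))\<^sup>2)) = (\<Sum>a<n. complex_of_real ((cmod (x a))\<^sup>2)) - (\<Sum>j<m. complex_of_real ((cmod (y j))\<^sup>2))"
    by (simp only: complex_norm_square)
  hence "(\<Sum>a<n. (cmod (x a - w a))\<^sup>2) = (\<Sum>a<n. (cmod (x a))\<^sup>2) - (\<Sum>j<m. (cmod (y j))\<^sup>2)"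
    by (metis (no_types) of_real_diff of_real_eq_iff of_real_sum)
  moreover have "0 \<le> (\<Sum>a<n. (cmod (x a - w a))\<^sup>2)" by (intro sum_nonneg) simp
  ultimately show ?thesis by (simp add: y_def)
qed

lemma mult_entry:
  assumes "A \<in> carrier_mat n k" "B \<in> carrier_mat k m" "i < n" "j < m"
  shows "(A * B) $$ (i,j) = (\<Sum>l<k. A $$ (i,l) * B $$ (l,j))"
  using assms by (simp add: scalar_prod_def atLeast0LessThan)

lemma group_sum:
  fixes g :: "nat \<Rightarrow> 'a::comm_monoid_add"
  shows "(\<Sum>j<r * c. g j) = (\<Sum>k<r. \<Sum>t<c. g (k*c+t))"
proof -
  have "(\<Sum>j<r * c. g j) = (\<Sum>k<r. sum g {k*c..<k*c+c})"
    by (rule sum.nat_group[symmetric])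
  also have "\<dots> = (\<Sum>k<r. \<Sum>t<c. g (k*c+t))"
  proof (rule sum.cong[OF refl])
    fix k
    have "sum g {0+k*c..<c+k*c} = sum (\<lambda>t. g (t+k*c)) {0..<c}"
      by (rule sum.shift_bounds_nat_ivl)
    then show "sum g {k*c..<k*c+c} = (\<Sum>t<c. g (k*c+t))"
      by (simp add: add.commute atLeast0LessThan)
  qed
  finally show ?thesis .
qed

lemma frob_expand:
  assumes "A \<in> carrier_mat n m" "B \<in> carrier_mat n m"
  shows "frob_sq (A - complex_of_real \<alpha> \<cdot>\<^sub>m B) = frob_sq A
     - 2 * \<alpha> * Re (\<Sum>i<n. \<Sum>j<m. cnj (A $$ (i,j)) * B $$ (i,j)) + \<alpha>\<^sup>2 * frob_sq B"
proof -
  have e: "(cmod (f - complex_of_real \<alpha> * g))\<^sup>2 = (cmod f)\<^sup>2 - 2 * \<alpha> * Re (cnj f * g) + \<alpha>\<^sup>2 * (cmod g)\<^sup>2"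
    for f g :: complex
    unfolding cmod_power2 by (simp add: power2_eq_square algebra_simps)
  show ?thesis using assms
    by (simp add: frob_sq_def e sum_subtractf sum.distrib sum_distrib_left Re_sum distrib_left)
qed

lemma herm_carrier: "A \<in> carrier_mat n m \<Longrightarrow> herm A \<in> carrier_mat m n"
  by (simp add: herm_def)

lemma herm_entry: "A \<in> carrier_mat n m \<Longrightarrow> i < m \<Longrightarrow> j < n \<Longrightarrow> herm A $$ (i,j) = cnj (A $$ (j,i))"
  by (simp add: herm_def)

lemma Cmat_carrier: "Cmat Nc NRF \<theta> \<in> carrier_mat (Nc*NRF) NRF"
  by (simp add: Cmat_def)

lemma SC_bound:
  assumes S: "S \<in> carrier_mat Nt (Nc * NRF)" and Nc: "Nc > 0"
  shows "frob_sq (S * Cmat Nc NRF \<theta>) \<le> frob_sq S"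
proof -
  let ?C = "Cmat Nc NRF \<theta>"
  have entry: "(S * ?C) $$ (i,k) = (\<Sum>t<Nc. S $$ (i, k*Nc+t) * cvec Nc \<theta> t)"
    if i: "i < Nt" and k: "k < NRF" for i k
  proof -
    have "(S * ?C) $$ (i,k) = (\<Sum>l<Nc*NRF. S $$ (i,l) * ?C $$ (l,k))"
      by (rule mult_entry[OF S Cmat_carrier i k])
    also have "\<dots> = (\<Sum>l<NRF*Nc. S $$ (i,l) * ?C $$ (l,k))" by (simp add: mult.commute)
    also have "\<dots> = (\<Sum>k'<NRF. \<Sum>t<Nc. S $$ (i,k'*Nc+t) * ?C $$ (k'*Nc+t,k))"
      by (rule group_sum)
    also have "\<dots> = (\<Sum>k'<NRF. if k' = k then (\<Sum>t<Nc. S $$ (i,k'*Nc+t) * cvec Nc \<theta> t) else 0)"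
    proof (rule sum.cong[OF refl])
      fix k' assume "k' \<in> {..<NRF}"
      hence k': "k' < NRF" by simp
      have lt: "k'*Nc+t < Nc*NRF" if "t < Nc" for t
      proof -
        have "k'*Nc+t < k'*Nc + Nc" using that by simp
        also have "\<dots> = Suc k' * Nc" by simp
        also have "\<dots> \<le> NRF * Nc" using k' by (intro mult_right_mono) auto
        finally show ?thesis by (simp add: mult.commute)
      qed
      have "?C $$ (k'*Nc+t,k) = (if k' = k then cvec Nc \<theta> t else 0)" if "t < Nc" for t
        using lt[OF that] k that Nc by (simp add: Cmat_def)
      then show "(\<Sum>t<Nc. S $$ (i,k'*Nc+t) * ?C $$ (k'*Nc+t,k)) =
        (if k' = k then (\<Sum>t<Nc. S $$ (i,k'*Nc+t) * cvec Nc \<theta> t) else 0)"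
        by (auto intro: sum.neutral)
    qed
    also have "\<dots> = (\<Sum>t<Nc. S $$ (i, k*Nc+t) * cvec Nc \<theta> t)"
      using k by simp
    finally show ?thesis .
  qed
  have cn: "cnj (cvec Nc \<theta> t) * cvec Nc \<theta> t = 1 / of_nat Nc" for t
  proof -
    have "cnj (cvec Nc \<theta> t) * cvec Nc \<theta> t = complex_of_real ((cmod (cvec Nc \<theta> t))\<^sup>2)"
      by (simp only: complex_norm_square mult.commute)
    also have "cmod (cvec Nc \<theta> t) = 1 / sqrt (real Nc)"
      by (simp add: cvec_def norm_divide cis_conv_exp[symmetric])
    finally show ?thesis using Nc by (simp add: power_divide)
  qed
  have row: "(\<Sum>k<NRF. (cmod ((S * ?C) $$ (i,k)))\<^sup>2) \<le> (\<Sum>j<Nc*NRF. (cmod (S $$ (i,j)))\<^sup>2)"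
    if i: "i < Nt" for i
  proof -
    have "(\<Sum>k<NRF. (cmod ((S * ?C) $$ (i,k)))\<^sup>2) = (\<Sum>k<NRF. (\<Sum>j<(1::nat). (cmod (\<Sum>t<Nc. S $$ (i, k*Nc+t) * cvec Nc \<theta> t))\<^sup>2))"
      using entry[OF i] by (simp del: lessThan_Suc add: card_lessThan)
    also have "\<dots> \<le> (\<Sum>k<NRF. \<Sum>t<Nc. (cmod (S $$ (i, k*Nc+t)))\<^sup>2)"
    proof (rule sum_mono)
      fix k
      show "(\<Sum>j<(1::nat). (cmod (\<Sum>t<Nc. S $$ (i, k*Nc+t) * cvec Nc \<theta> t))\<^sup>2) \<le> (\<Sum>t<Nc. (cmod (S $$ (i, k*Nc+t)))\<^sup>2)"
        using bessel[where m=1 and n=Nc and D="\<lambda>t j. cvec Nc \<theta> t" and x="\<lambda>t. S $$ (i, k*Nc+t)"] cn Nc by simp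
    qed
    also have "\<dots> = (\<Sum>j<NRF*Nc. (cmod (S $$ (i,j)))\<^sup>2)"
      by (rule group_sum[symmetric])
    finally show ?thesis by (simp add: mult.commute)
  qed
  have d: "dim_row (S * ?C) = Nt" "dim_col (S * ?C) = NRF" using S by (auto simp: Cmat_def)
  show ?thesis unfolding frob_sq_def d using S row by (auto intro: sum_mono)
qed

theorem lemma1:
  fixes Nt Nc NRF K Ns :: nat
    and \<theta> :: "nat \<Rightarrow> real"
    and Fopt S FDD :: "complex mat"
    and \<alpha> :: real
  assumes "Nt > 0" "Nc > 0" "NRF > 0" "K > 0" "Ns > 0"
    and "K * Ns \<le> NRF"
    and "Fopt \<in> carrier_mat Nt (K * Ns)"
    and "S \<in> carrier_mat Nt (Nc * NRF)"
    and "\<forall>i<Nt. \<forall>j<Nc * NRF. S $$ (i,j) \<in> {0, 1}"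
    and "FDD \<in> carrier_mat NRF (K * Ns)"
    and "herm FDD * FDD = 1\<^sub>m (K * Ns)"
  shows "frob_sq (Fopt - S * Cmat Nc NRF \<theta> * (complex_of_real \<alpha> \<cdot>\<^sub>m FDD))
         \<le> frob_sq Fopt
            - 2 * \<alpha> * Re (mtrace (FDD * herm Fopt * S * Cmat Nc NRF \<theta>))
            + \<alpha>\<^sup>2 * frob_sq S"
proof -
  define m where "m = K * Ns"
  define C where "C = Cmat Nc NRF \<theta>"
  define M where "M = S * C"
  have F: "Fopt \<in> carrier_mat Nt m" using assms(7) by (simp add: m_def)
  have D: "FDD \<in> carrier_mat NRF m" using assms(10) by (simp add: m_def)
  have S: "S \<in> carrier_mat Nt (Nc*NRF)" by fact
  have C: "C \<in> carrier_mat (Nc*NRF) NRF" by (simp add: C_def Cmat_carrier)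
  have M: "M \<in> carrier_mat Nt NRF" using S C by (simp add: M_def)
  have hF: "herm Fopt \<in> carrier_mat m Nt" using F by (rule herm_carrier)
  have MD: "M * FDD \<in> carrier_mat Nt m" using M D by simp
  have orth: "(\<Sum>a<NRF. cnj (FDD $$ (a,j)) * FDD $$ (a,k)) = (if j = k then 1 else 0)"
    if "j < m" "k < m" for j k
  proof -
    have "(herm FDD * FDD) $$ (j,k) = (\<Sum>a<NRF. herm FDD $$ (j,a) * FDD $$ (a,k))"
      by (rule mult_entry[OF herm_carrier[OF D] D that])
    also have "\<dots> = (\<Sum>a<NRF. cnj (FDD $$ (a,j)) * FDD $$ (a,k))"
      using D that by (intro sum.cong) (auto simp: herm_entry)
    finally show ?thesis using assms(11) that by (simp add: m_def)
  qed
  have eq1: "S * C * (complex_of_real \<alpha> \<cdot>\<^sub>m FDD) = complex_of_real \<alpha> \<cdot>\<^sub>m (M * FDD)"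
    unfolding M_def using mult_smult_distrib[OF _ D, of "S * C" Nt] S C by simp
  have tr: "mtrace (FDD * herm Fopt * S * C) = (\<Sum>i<Nt. \<Sum>j<m. cnj (Fopt $$ (i,j)) * (M * FDD) $$ (i,j))"
  proof -
    have "FDD * herm Fopt * S * C = FDD * (herm Fopt * M)"
    proof -
      have "FDD * herm Fopt * S * C = FDD * (herm Fopt * S) * C"
        using D hF S by simp
      also have "\<dots> = FDD * (herm Fopt * S * C)"
        using D hF S C by (meson assoc_mult_mat mult_carrier_mat)
      also have "\<dots> = FDD * (herm Fopt * M)"
        using hF S C by (simp add: M_def)
      finally show ?thesis .
    qed
    hence "mtrace (FDD * herm Fopt * S * C) = (\<Sum>a<NRF. (FDD * (herm Fopt * M)) $$ (a,a))"
      using D by (simp add: mtrace_def)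
    also have "\<dots> = (\<Sum>a<NRF. \<Sum>j<m. \<Sum>i<Nt. FDD $$ (a,j) * (cnj (Fopt $$ (i,j)) * M $$ (i,a)))"
    proof (rule sum.cong[OF refl])
      fix a assume "a \<in> {..<NRF}"
      hence a: "a < NRF" by simp
      have "(FDD * (herm Fopt * M)) $$ (a,a) = (\<Sum>j<m. FDD $$ (a,j) * (herm Fopt * M) $$ (j,a))"
        using mult_entry[OF D _ a a] hF M by simp
      also have "\<dots> = (\<Sum>j<m. \<Sum>i<Nt. FDD $$ (a,j) * (cnj (Fopt $$ (i,j)) * M $$ (i,a)))"
      proof (rule sum.cong[OF refl])
        fix j assume "j \<in> {..<m}"
        hence j: "j < m" by simp
        have "(herm Fopt * M) $$ (j,a) = (\<Sum>i<Nt. herm Fopt $$ (j,i) * M $$ (i,a))"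
          by (rule mult_entry[OF hF M j a])
        also have "\<dots> = (\<Sum>i<Nt. cnj (Fopt $$ (i,j)) * M $$ (i,a))"
          using F j by (intro sum.cong) (auto simp: herm_entry)
        finally show "FDD $$ (a,j) * (herm Fopt * M) $$ (j,a) = (\<Sum>i<Nt. FDD $$ (a,j) * (cnj (Fopt $$ (i,j)) * M $$ (i,a)))"
          by (simp add: sum_distrib_left)
      qed
      finally show "(FDD * (herm Fopt * M)) $$ (a,a) = (\<Sum>j<m. \<Sum>i<Nt. FDD $$ (a,j) * (cnj (Fopt $$ (i,j)) * M $$ (i,a)))" .
    qed
    also have "\<dots> = (\<Sum>j<m. \<Sum>a<NRF. \<Sum>i<Nt. FDD $$ (a,j) * (cnj (Fopt $$ (i,j)) * M $$ (i,a)))"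
      by (rule sum.swap)
    also have "\<dots> = (\<Sum>j<m. \<Sum>i<Nt. \<Sum>a<NRF. FDD $$ (a,j) * (cnj (Fopt $$ (i,j)) * M $$ (i,a)))"
      by (rule sum.cong[OF refl], rule sum.swap)
    also have "\<dots> = (\<Sum>i<Nt. \<Sum>j<m. \<Sum>a<NRF. FDD $$ (a,j) * (cnj (Fopt $$ (i,j)) * M $$ (i,a)))"
      by (rule sum.swap)
    also have "\<dots> = (\<Sum>i<Nt. \<Sum>j<m. cnj (Fopt $$ (i,j)) * (M * FDD) $$ (i,j))"
    proof (intro sum.cong refl)
      fix i j assume "i \<in> {..<Nt}" "j \<in> {..<m}"
      hence i: "i < Nt" and j: "j < m" by auto
      show "(\<Sum>a<NRF. FDD $$ (a,j) * (cnj (Fopt $$ (i,j)) * M $$ (i,a))) = cnj (Fopt $$ (i,j)) * (M * FDD) $$ (i,j)"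
        by (simp add: mult_entry[OF M D i j] sum_distrib_left algebra_simps)
    qed
    finally show ?thesis .
  qed
  have b1: "frob_sq (M * FDD) \<le> frob_sq M"
  proof -
    have "frob_sq (M * FDD) = (\<Sum>i<Nt. \<Sum>j<m. (cmod (\<Sum>a<NRF. M $$ (i,a) * FDD $$ (a,j)))\<^sup>2)"
    proof -
      have dd: "dim_row (M * FDD) = Nt" "dim_col (M * FDD) = m" using MD by auto
      show ?thesis unfolding frob_sq_def dd
        by (intro sum.cong refl) (simp only: mult_entry[OF M D] lessThan_iff)
    qed
    also have "\<dots> \<le> (\<Sum>i<Nt. \<Sum>a<NRF. (cmod (M $$ (i,a)))\<^sup>2)"
      by (intro sum_mono bessel orth)
    also have "\<dots> = frob_sq M" unfolding frob_sq_def using M by simp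
    finally show ?thesis .
  qed
  have b2: "frob_sq M \<le> frob_sq S"
    unfolding M_def C_def by (rule SC_bound[OF S assms(2)])
  have "frob_sq (Fopt - S * C * (complex_of_real \<alpha> \<cdot>\<^sub>m FDD)) =
     frob_sq Fopt - 2 * \<alpha> * Re (mtrace (FDD * herm Fopt * S * C)) + \<alpha>\<^sup>2 * frob_sq (M * FDD)"
    unfolding eq1 tr by (rule frob_expand[OF F MD])
  also have "\<dots> \<le> frob_sq Fopt - 2 * \<alpha> * Re (mtrace (FDD * herm Fopt * S * C)) + \<alpha>\<^sup>2 * frob_sq S"
    using b1 b2 by (simp add: mult_left_mono)
  finally show ?thesis by (simp add: C_def)
qed

end
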